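(* Let $y$ be a $\lambda$-variable, $t$ a term, and $\sigma=[(x_i:=y)_{1\le i\le n};(a_j:=^*y)_{1\le j\le m}]$ for distinct $\lambda$-variables $x_1,\dots,x_n$ and distinct $\mu$-variables $a_1,\dots,a_m$. (1) If $(t\sigma\;y)$ is normalizable, then $t$ is normalizable. (2) If $t\sigma$ is normalizable, then $t$ is normalizable.
   Context: $\lambda\mu$-terms: $t::= x\mid \lambda x.t\mid (t\;t)\mid \mu a.t\mid (a\;t)$ over disjoint infinite sets of $\lambda$-variables and $\mu$-variables. Reduction $(\lambda x.u\;v)\triangleright u[x:=v]$, $(\mu a.u\;v)\triangleright\mu a.u[a:=^*v]$ ($u[a:=^*v]$ replaces each subterm $(a\;w)$ of $u$ by $(a\;(w\;v))$); a term is normalizable if it reduces (by the compatible closure of these rules) to a normal form. $t[(x_i:=y);(a_j:=^*y)]$ is obtained from $t$ by replacing each $x_i$ by $y$ and inductively each subterm $(a_j\;w)$ by $(a_j\;(w\;y))$. *)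

theory Defs
  imports Main
begin

text \<open>lambda-mu-terms in de Bruijn representation, with two separate index spaces:
  LVar i is the lambda-variable with index i (bound by Lam),
  Named a t is the named term (a t) for the mu-variable with index a (bound by Mu).
  Free variables are the indices exceeding the number of enclosing binders of the
  respective kind; alpha-equivalence is syntactic identity.\<close>

datatype trm = LVar nat | Lam trm | App trm trm | Mu trm | Named nat trm

fun liftL :: "nat \<Rightarrow> trm \<Rightarrow> trm" where
  "liftL k (LVar i) = (if i < k then LVar i else LVar (Suc i))"
| "liftL k (Lam t) = Lam (liftL (Suc k) t)"
| "liftL k (App t u) = App (liftL k t) (liftL k u)"
| "liftL k (Mu t) = Mu (liftL k t)"
| "liftL k (Named a t) = Named a (liftL k t)"

fun liftM :: "nat \<Rightarrow> trm \<Rightarrow> trm" where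
  "liftM k (LVar i) = LVar i"
| "liftM k (Lam t) = Lam (liftM k t)"
| "liftM k (App t u) = App (liftM k t) (liftM k u)"
| "liftM k (Mu t) = Mu (liftM (Suc k) t)"
| "liftM k (Named a t) = Named (if a < k then a else Suc a) (liftM k t)"

fun substL :: "trm \<Rightarrow> nat \<Rightarrow> trm \<Rightarrow> trm" where
  "substL (LVar i) k s = (if i < k then LVar i else if i = k then s else LVar (i - 1))"
| "substL (Lam t) k s = Lam (substL t (Suc k) (liftL 0 s))"
| "substL (App t u) k s = App (substL t k s) (substL u k s)"
| "substL (Mu t) k s = Mu (substL t k (liftM 0 s))"
| "substL (Named a t) k s = Named a (substL t k s)"

fun substM :: "trm \<Rightarrow> nat \<Rightarrow> trm \<Rightarrow> trm" where
  "substM (LVar i) k v = LVar i"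
| "substM (Lam t) k v = Lam (substM t k (liftL 0 v))"
| "substM (App t u) k v = App (substM t k v) (substM u k v)"
| "substM (Mu t) k v = Mu (substM t (Suc k) (liftM 0 v))"
| "substM (Named a t) k v =
     (if a = k then Named a (App (substM t k v) v) else Named a (substM t k v))"

inductive red1 :: "trm \<Rightarrow> trm \<Rightarrow> bool" where
  beta: "red1 (App (Lam u) v) (substL u 0 v)"
| mu: "red1 (App (Mu u) v) (Mu (substM u 0 (liftM 0 v)))"
| lam: "red1 t t' \<Longrightarrow> red1 (Lam t) (Lam t')"
| appL: "red1 t t' \<Longrightarrow> red1 (App t u) (App t' u)"
| appR: "red1 u u' \<Longrightarrow> red1 (App t u) (App t u')"
| muc: "red1 t t' \<Longrightarrow> red1 (Mu t) (Mu t')"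
| named: "red1 t t' \<Longrightarrow> red1 (Named a t) (Named a t')"

definition normal :: "trm \<Rightarrow> bool" where
  "normal t \<longleftrightarrow> (\<nexists>t'. red1 t t')"

definition normalizable :: "trm \<Rightarrow> bool" where
  "normalizable t \<longleftrightarrow> (\<exists>u. red1\<^sup>*\<^sup>* t u \<and> normal u)"

text \<open>Simultaneous substitution t[(x_i := y); (a_j :=* y)] for free lambda-variables
  xs, free mu-variables as and a free lambda-variable y; dl and dm count the enclosing
  lambda- and mu-binders.\<close>
fun sigma_aux :: "nat list \<Rightarrow> nat list \<Rightarrow> nat \<Rightarrow> nat \<Rightarrow> nat \<Rightarrow> trm \<Rightarrow> trm" where
  "sigma_aux xs as y dl dm (LVar i) =
     (if dl \<le> i \<and> i - dl \<in> set xs then LVar (y + dl) else LVar i)"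
| "sigma_aux xs as y dl dm (Lam t) = Lam (sigma_aux xs as y (Suc dl) dm t)"
| "sigma_aux xs as y dl dm (App t u) = App (sigma_aux xs as y dl dm t) (sigma_aux xs as y dl dm u)"
| "sigma_aux xs as y dl dm (Mu t) = Mu (sigma_aux xs as y dl (Suc dm) t)"
| "sigma_aux xs as y dl dm (Named a t) =
     (if dm \<le> a \<and> a - dm \<in> set as
      then Named a (App (sigma_aux xs as y dl dm t) (LVar (y + dl)))
      else Named a (sigma_aux xs as y dl dm t))"

definition sigma :: "nat list \<Rightarrow> nat list \<Rightarrow> nat \<Rightarrow> trm \<Rightarrow> trm" where
  "sigma xs as y t = sigma_aux xs as y 0 0 t"

end

theory Submission
  imports Defs
begin


definition up :: "(nat \<Rightarrow> nat) \<Rightarrow> nat \<Rightarrow> nat" where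
  "up f i = (case i of 0 \<Rightarrow> 0 | Suc j \<Rightarrow> Suc (f j))"
definition cns :: "nat \<Rightarrow> (nat \<Rightarrow> nat) \<Rightarrow> nat \<Rightarrow> nat" where
  "cns y f i = (case i of 0 \<Rightarrow> y | Suc j \<Rightarrow> f j)"
definition sb :: "nat \<Rightarrow> nat \<Rightarrow> nat" where
  "sb k i = (if i < k then i else i - 1)"

fun ren :: "(nat \<Rightarrow> nat) \<Rightarrow> trm \<Rightarrow> trm" where
  "ren h (LVar i) = LVar (h i)"
| "ren h (Lam t) = Lam (ren (up h) t)"
| "ren h (App t u) = App (ren h t) (ren h u)"
| "ren h (Mu t) = Mu (ren h t)"
| "ren h (Named a t) = Named a (ren h t)"

lemma liftL_ren: "liftL k t = ren (\<lambda>i. if i < k then i else Suc i) t"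
proof (induction t arbitrary: k)
  case (Lam t)
  have "up (\<lambda>i. if i < k then i else Suc i) = (\<lambda>i. if i < Suc k then i else Suc i)"
    by (auto simp: up_def fun_eq_iff split: nat.split)
  then show ?case using Lam by simp
qed auto

lemma substL_var_ren: "substL t k (LVar j) = ren (\<lambda>i. if i < k then i else if i = k then j else i - 1) t"
proof (induction t arbitrary: k j)
  case (Lam t)
  have "up (\<lambda>i. if i < k then i else if i = k then j else i - 1) = (\<lambda>i. if i < Suc k then i else if i = Suc k then Suc j else i - 1)"
    by (auto simp: up_def fun_eq_iff split: nat.split)
  then show ?case using Lam by simp
qed auto

inductive rel :: "(nat \<Rightarrow> nat) \<Rightarrow> nat \<Rightarrow> nat set \<Rightarrow> trm \<Rightarrow> trm \<Rightarrow> bool" where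
  var: "rel f y A (LVar i) (LVar (f i))"
| lam: "rel (up f) (Suc y) A t s \<Longrightarrow> rel f y A (Lam t) (Lam s)"
| app: "rel f y A t s \<Longrightarrow> rel f y A u v \<Longrightarrow> rel f y A (App t u) (App s v)"
| mu: "rel f y (Suc ` A) t s \<Longrightarrow> rel f y A (Mu t) (Mu s)"
| named: "rel f y A t s \<Longrightarrow> rel f y A (Named a t) (Named a s)"
| nap: "a \<in> A \<Longrightarrow> rel f y A t s \<Longrightarrow> rel f y A (Named a t) (Named a (App s (LVar y)))"
| nlam: "a \<in> A \<Longrightarrow> rel (cns y f) y A t s \<Longrightarrow> rel f y A (Named a (Lam t)) (Named a s)"
| nmu: "a \<in> A \<Longrightarrow> rel f y (insert 0 (Suc ` A)) t s \<Longrightarrow> rel f y A (Named a (Mu t)) (Named a (Mu s))"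

lemma rel_mono: "rel f y A t s \<Longrightarrow> A \<subseteq> B \<Longrightarrow> rel f y B t s"
proof (induction arbitrary: B rule: rel.induct)
  case (mu f y A t s) then show ?case by (auto intro!: rel.mu)
next
  case (nmu a A f y t s) then show ?case by (auto intro!: rel.nmu)
qed (auto intro: rel.intros)

lemma rel_ren_s: "rel f y A M N \<Longrightarrow> rel (h \<circ> f) (h y) A M (ren h N)"
proof (induction arbitrary: h rule: rel.induct)
  case (var f y A i) then show ?case using rel.var[of "h \<circ> f" "h y" A i] by (simp add: comp_def)
next
  case (lam f y A t s)
  have "up h \<circ> up f = up (h \<circ> f)" by (auto simp: up_def fun_eq_iff split: nat.split)
  moreover have "up h (Suc y) = Suc (h y)" by (simp add: up_def)
  ultimately show ?case using lam.IH[of "up h"] by (auto intro!: rel.lam simp: comp_def)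
next
  case (nlam a A y f t s)
  have eq: "(\<lambda>a. h (cns y f a)) = cns (h y) (\<lambda>a. h (f a))" by (auto simp: cns_def fun_eq_iff split: nat.split)
  have "rel (cns (h y) (\<lambda>a. h (f a))) (h y) A t (ren h s)" using nlam.IH[of h] unfolding comp_def eq .
  then show ?case using nlam by (auto intro!: rel.nlam)
qed (auto intro: rel.intros)

lemma rel_ren_t: "rel f y A M N \<Longrightarrow> (\<forall>i. g (p i) = f i) \<Longrightarrow> rel g y A (ren p M) N"
proof (induction arbitrary: g p rule: rel.induct)
  case (var f y A i) then show ?case using rel.var[of g y A "p i"] by simp
next
  case (lam f y A t s)
  have "\<forall>i. up g (up p i) = up f i" using lam.prems by (auto simp: up_def split: nat.split)
  then show ?case using lam.IH by (auto intro!: rel.lam)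
next
  case (nlam a A y f t s)
  have "\<forall>i. cns y g (up p i) = cns y f i" using nlam.prems by (auto simp: up_def cns_def split: nat.split)
  then show ?case using nlam by (auto intro!: rel.nlam)
qed (auto intro: rel.intros)

lemma rel_lift_both: "rel f y A u v \<Longrightarrow> rel (up f) (Suc y) A (liftL 0 u) (liftL 0 v)"
proof -
  assume "rel f y A u v"
  then have "rel (Suc \<circ> f) (Suc y) A u (ren Suc v)" using rel_ren_s[of f y A u v Suc] by simp
  then have "rel (up f) (Suc y) A (ren Suc u) (ren Suc v)"
    by (rule rel_ren_t) (auto simp: up_def)
  then show ?thesis by (simp add: liftL_ren)
qed

lemma rel_lift_t: "rel f y A u v \<Longrightarrow> rel (cns z f) y A (liftL 0 u) v"
  by (simp add: liftL_ren) (rule rel_ren_t, assumption, simp add: cns_def)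

lemma rel_liftM: "rel f y A u v \<Longrightarrow> (\<forall>a\<in>A. (if a < k then a else Suc a) \<in> B) \<Longrightarrow>
   rel f y B (liftM k u) (liftM k v)"
proof (induction arbitrary: k B rule: rel.induct)
  case (mu f y A t s)
  have "\<forall>a\<in>Suc ` A. (if a < Suc k then a else Suc a) \<in> Suc ` B" using mu.prems by auto
  then show ?case using mu.IH by (auto intro!: rel.mu)
next
  case (nap a A f y t s) then show ?case by (auto intro!: rel.nap)
next
  case (nlam a A y f t s) then show ?case by (auto intro!: rel.nlam)
next
  case (nmu a A f y t s)
  have "\<forall>a\<in>insert 0 (Suc ` A). (if a < Suc k then a else Suc a) \<in> insert 0 (Suc ` B)" using nmu.prems by auto
  then show ?case using nmu by (auto intro!: rel.nmu)
qed (auto intro: rel.intros)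

lemma rel_liftM0: "rel f y A u v \<Longrightarrow> rel f y (Suc ` A) (liftM 0 u) (liftM 0 v)"
  by (rule rel_liftM) auto



lemma substL_LVar_ne: "i \<noteq> k \<Longrightarrow> substL (LVar i) k u = LVar (sb k i)"
  by (simp add: sb_def)

lemma rel_substL: "rel fM yM A M N \<Longrightarrow> rel f (sb k' yM) A u v \<Longrightarrow> fM k = k' \<Longrightarrow>
  (\<forall>i. i \<noteq> k \<longrightarrow> fM i \<noteq> k' \<and> f (sb k i) = sb k' (fM i)) \<Longrightarrow> yM \<noteq> k' \<Longrightarrow>
  rel f (sb k' yM) A (substL M k u) (substL N k' v)"
proof (induction arbitrary: f k k' u v rule: rel.induct)
  case (var fM yM A i)
  show ?case
  proof (cases "i = k")
    case True then show ?thesis using var by simp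
  next
    case False
    then have "fM i \<noteq> k'" and e: "f (sb k i) = sb k' (fM i)" using var by auto
    have "rel f (sb k' yM) A (LVar (sb k i)) (LVar (sb k' (fM i)))" using rel.var[of f "sb k' yM" A "sb k i"] e by simp
    then show ?thesis by (simp only: substL_LVar_ne[OF False] substL_LVar_ne[OF \<open>fM i \<noteq> k'\<close>] substM.simps)
  qed
next
  case (lam fM yM A t s)
  have y: "sb (Suc k') (Suc yM) = Suc (sb k' yM)" using lam.prems by (auto simp: sb_def)
  have u: "rel (up f) (sb (Suc k') (Suc yM)) A (liftL 0 u) (liftL 0 v)"
    unfolding y by (rule rel_lift_both) (rule lam.prems)
  have k: "up fM (Suc k) = Suc k'" using lam.prems by (simp add: up_def)
  have c: "\<forall>i. i \<noteq> Suc k \<longrightarrow> up fM i \<noteq> Suc k' \<and> up f (sb (Suc k) i) = sb (Suc k') (up fM i)"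
  proof (intro allI impI)
    fix i assume i: "i \<noteq> Suc k"
    show "up fM i \<noteq> Suc k' \<and> up f (sb (Suc k) i) = sb (Suc k') (up fM i)"
    proof (cases i)
      case 0 then show ?thesis by (simp add: up_def sb_def)
    next
      case (Suc j)
      then have "j \<noteq> k" using i by simp
      then have h: "fM j \<noteq> k'" "f (sb k j) = sb k' (fM j)" using lam.prems by auto
      have "sb (Suc k) (Suc j) = Suc (sb k j)" using \<open>j \<noteq> k\<close> by (auto simp: sb_def)
      moreover have "sb (Suc k') (Suc (fM j)) = Suc (sb k' (fM j))" using h(1) by (auto simp: sb_def)
      ultimately show ?thesis using Suc h by (simp add: up_def)
    qed
  qed
  have "rel (up f) (sb (Suc k') (Suc yM)) A (substL t (Suc k) (liftL 0 u)) (substL s (Suc k') (liftL 0 v))"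
    using lam.IH[OF u k c] lam.prems by simp
  then show ?case unfolding y substL.simps by (rule rel.lam)
next
  case (app fM yM A t s u' v')
  show ?case using app.IH(1)[OF app.prems] app.IH(2)[OF app.prems] by (simp add: rel.app)
next
  case (mu fM yM A t s)
  have "rel f (sb k' yM) (Suc ` A) (liftM 0 u) (liftM 0 v)" using mu.prems(1) by (rule rel_liftM0)
  from mu.IH[OF this mu.prems(2-4)] show ?case by (simp add: rel.mu)
next
  case (named fM yM A t s a)
  show ?case using named.IH[OF named.prems] by (simp add: rel.named)
next
  case (nap a A fM yM t s)
  have "rel f (sb k' yM) A (substL t k u) (substL s k' v)" using nap.IH[OF nap.prems] .
  moreover have "substL (LVar yM) k' v = LVar (sb k' yM)" using nap.prems by (simp add: sb_def)
  ultimately show ?case using nap.hyps by (simp add: rel.nap)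
next
  case (nlam a A yM fM t s)
  let ?f = "cns (sb k' yM) f"
  have u: "rel ?f (sb k' yM) A (liftL 0 u) v" by (rule rel_lift_t) (rule nlam.prems)
  have k: "cns yM fM (Suc k) = k'" using nlam.prems by (simp add: cns_def)
  have c: "\<forall>i. i \<noteq> Suc k \<longrightarrow> cns yM fM i \<noteq> k' \<and> ?f (sb (Suc k) i) = sb k' (cns yM fM i)"
  proof (intro allI impI)
    fix i assume i: "i \<noteq> Suc k"
    show "cns yM fM i \<noteq> k' \<and> ?f (sb (Suc k) i) = sb k' (cns yM fM i)"
    proof (cases i)
      case 0 then show ?thesis using nlam.prems by (simp add: cns_def sb_def)
    next
      case (Suc j)
      then have "j \<noteq> k" using i by simp
      then have h: "fM j \<noteq> k'" "f (sb k j) = sb k' (fM j)" using nlam.prems by auto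
      have "sb (Suc k) (Suc j) = Suc (sb k j)" using \<open>j \<noteq> k\<close> by (auto simp: sb_def)
      then show ?thesis using Suc h by (simp add: cns_def)
    qed
  qed
  have "rel ?f (sb k' yM) A (substL t (Suc k) (liftL 0 u)) (substL s k' v)"
    using nlam.IH[OF u k c] nlam.prems by simp
  then show ?case unfolding substL.simps by (rule rel.nlam[OF nlam.hyps(1)])
next
  case (nmu a A fM yM t s)
  have "rel f (sb k' yM) (Suc ` A) (liftM 0 u) (liftM 0 v)" using nmu.prems(1) by (rule rel_liftM0)
  then have "rel f (sb k' yM) (insert 0 (Suc ` A)) (liftM 0 u) (liftM 0 v)" by (rule rel_mono) auto
  from nmu.IH[OF this nmu.prems(2-4)] show ?case using nmu.hyps by (simp add: rel.nmu)
qed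


lemma rel_substM: "rel f y B M N \<Longrightarrow> rel f y B u v \<Longrightarrow> k \<notin> B \<Longrightarrow>
  rel f y B (substM M k u) (substM N k v)"
proof (induction arbitrary: k u v rule: rel.induct)
  case (var f y A i) then show ?case by (simp add: rel.var)
next
  case (app f y A t s u' v')
  then show ?case by (simp add: rel.app)
next
  case (lam f y A t s)
  have "rel (up f) (Suc y) A (liftL 0 u) (liftL 0 v)" by (rule rel_lift_both) (rule lam.prems)
  then show ?case using lam by (auto intro!: rel.lam)
next
  case (mu f y A t s)
  have "rel f y (Suc ` A) (liftM 0 u) (liftM 0 v)" using mu.prems(1) by (rule rel_liftM0)
  moreover have "Suc k \<notin> Suc ` A" using mu.prems by auto
  ultimately show ?case using mu.IH by (auto intro!: rel.mu)
next
  case (named f y A t s a)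
  then show ?case by (auto intro!: rel.named rel.app)
next
  case (nap a A f y t s)
  then have "a \<noteq> k" by auto
  then show ?case using nap by (auto intro!: rel.nap)
next
  case (nlam a A y f t s)
  then have "a \<noteq> k" by auto
  have "rel (cns y f) y A (liftL 0 u) v" by (rule rel_lift_t) (rule nlam.prems)
  then show ?case using nlam \<open>a \<noteq> k\<close> by (auto intro!: rel.nlam)
next
  case (nmu a A f y t s)
  then have "a \<noteq> k" by auto
  have "rel f y (Suc ` A) (liftM 0 u) (liftM 0 v)" using nmu.prems(1) by (rule rel_liftM0)
  then have "rel f y (insert 0 (Suc ` A)) (liftM 0 u) (liftM 0 v)" by (rule rel_mono) auto
  moreover have "Suc k \<notin> insert 0 (Suc ` A)" using nmu.prems by auto
  ultimately show ?case using nmu \<open>a \<noteq> k\<close> by (auto intro!: rel.nmu)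
qed


lemma rel_substM_var: "rel f y B M N \<Longrightarrow> k \<notin> B \<Longrightarrow>
  rel f y (insert k B) M (substM N k (LVar y))"
proof (induction arbitrary: k rule: rel.induct)
  case (var f y A i) then show ?case by (simp add: rel.var)
next
  case (lam f y A t s)
  show ?case using lam.IH[OF lam.prems] by (simp add: rel.lam)
next
  case (app f y A t s u v)
  show ?case using app.IH(1)[OF app.prems] app.IH(2)[OF app.prems] by (simp add: rel.app)
next
  case (mu f y A t s)
  have "Suc k \<notin> Suc ` A" using mu.prems by auto
  then have "rel f y (insert (Suc k) (Suc ` A)) t (substM s (Suc k) (LVar y))" using mu.IH by blast
  then show ?case by (simp add: rel.mu)
next
  case (named f y A t s a)
  show ?case
  proof (cases "a = k")
    case True
    then show ?thesis using named.IH[OF named.prems] by (simp add: rel.nap)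
  next
    case False
    then show ?thesis using named.IH[OF named.prems] by (simp add: rel.named)
  qed
next
  case (nap a A f y t s)
  then have "a \<noteq> k" by auto
  then show ?case using nap.IH[OF nap.prems] nap.hyps by (simp add: rel.nap)
next
  case (nlam a A y f t s)
  then have "a \<noteq> k" by auto
  then show ?case using nlam.IH[OF nlam.prems] nlam.hyps by (simp add: rel.nlam)
next
  case (nmu a A f y t s)
  then have "a \<noteq> k" by auto
  have "Suc k \<notin> insert 0 (Suc ` A)" using nmu.prems by auto
  then have "rel f y (insert (Suc k) (insert 0 (Suc ` A))) t (substM s (Suc k) (LVar y))" using nmu.IH by blast
  then have "rel f y (insert 0 (Suc ` insert k A)) t (substM s (Suc k) (LVar y))" by (simp add: insert_commute)
  then show ?case using nmu.hyps \<open>a \<noteq> k\<close> by (simp add: rel.nmu)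
qed



inductive_cases red1_LVarE: "red1 (LVar i) s"
inductive_cases red1_LamE: "red1 (Lam t) s"
inductive_cases red1_AppE: "red1 (App t u) s"
inductive_cases red1_MuE: "red1 (Mu t) s"
inductive_cases red1_NamedE: "red1 (Named a t) s"
inductive_cases relLamS: "rel f y A t (Lam N)"
inductive_cases relMuS: "rel f y A t (Mu N)"
inductive_cases relLamT: "rel f y A (Lam M) s"
inductive_cases relMuT: "rel f y A (Mu M) s"

lemma rtc_lam: "red1\<^sup>*\<^sup>* t t' \<Longrightarrow> red1\<^sup>*\<^sup>* (Lam t) (Lam t')"
  by (induction rule: rtranclp_induct) (auto intro: rtranclp.rtrancl_into_rtrancl red1.lam)
lemma rtc_mu: "red1\<^sup>*\<^sup>* t t' \<Longrightarrow> red1\<^sup>*\<^sup>* (Mu t) (Mu t')"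
  by (induction rule: rtranclp_induct) (auto intro: rtranclp.rtrancl_into_rtrancl red1.muc)
lemma rtc_named: "red1\<^sup>*\<^sup>* t t' \<Longrightarrow> red1\<^sup>*\<^sup>* (Named a t) (Named a t')"
  by (induction rule: rtranclp_induct) (auto intro: rtranclp.rtrancl_into_rtrancl red1.named)
lemma rtc_appL: "red1\<^sup>*\<^sup>* t t' \<Longrightarrow> red1\<^sup>*\<^sup>* (App t u) (App t' u)"
  by (induction rule: rtranclp_induct) (auto intro: rtranclp.rtrancl_into_rtrancl red1.appL)
lemma rtc_appR: "red1\<^sup>*\<^sup>* u u' \<Longrightarrow> red1\<^sup>*\<^sup>* (App t u) (App t u')"
  by (induction rule: rtranclp_induct) (auto intro: rtranclp.rtrancl_into_rtrancl red1.appR)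

lemma rel_red_t: "rel f y A t s \<Longrightarrow> red1 t t' \<Longrightarrow> \<exists>s'. red1 s s'"
proof (induction arbitrary: t' rule: rel.induct)
  case (var f y A i) then show ?case by (auto elim: red1_LVarE)
next
  case (lam f y A t s)
  from lam.prems obtain t1 where "red1 t t1" by (auto elim: red1_LamE)
  then obtain s1 where "red1 s s1" using lam.IH by blast
  then show ?case by (blast intro: red1.lam)
next
  case (app f y A t s u v)
  from app.prems show ?case
  proof (rule red1_AppE)
    fix M assume 1: "t = Lam M" "t' = substL M 0 u"
    with app.hyps(1) obtain N where "s = Lam N" by (auto elim: relLamT)
    then show ?thesis by (blast intro: red1.beta)
  next
    fix M assume 2: "t = Mu M" "t' = Mu (substM M 0 (liftM 0 u))"
    with app.hyps(1) obtain N where "s = Mu N" by (auto elim: relMuT)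
    then show ?thesis by (blast intro: red1.mu)
  next
    fix t1 assume "t' = App t1 u" "red1 t t1"
    then show ?thesis using app.IH(1) by (blast intro: red1.appL)
  next
    fix u1 assume "t' = App t u1" "red1 u u1"
    then show ?thesis using app.IH(2) by (blast intro: red1.appR)
  qed
next
  case (mu f y A t s)
  from mu.prems obtain t1 where "red1 t t1" by (auto elim: red1_MuE)
  then obtain s1 where "red1 s s1" using mu.IH by blast
  then show ?case by (blast intro: red1.muc)
next
  case (named f y A t s a)
  from named.prems obtain t1 where "red1 t t1" by (auto elim: red1_NamedE)
  then obtain s1 where "red1 s s1" using named.IH by blast
  then show ?case by (blast intro: red1.named)
next
  case (nap a A f y t s)
  from nap.prems obtain t1 where "red1 t t1" by (auto elim: red1_NamedE)
  then obtain s1 where "red1 s s1" using nap.IH by blast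
  then show ?case by (blast intro: red1.named red1.appL)
next
  case (nlam a A y f t s)
  from nlam.prems obtain t1 where "red1 (Lam t) t1" by (auto elim: red1_NamedE)
  then obtain t2 where "red1 t t2" by (auto elim: red1_LamE)
  then obtain s1 where "red1 s s1" using nlam.IH by blast
  then show ?case by (blast intro: red1.named)
next
  case (nmu a A f y t s)
  from nmu.prems obtain t1 where "red1 (Mu t) t1" by (auto elim: red1_NamedE)
  then obtain t2 where "red1 t t2" by (auto elim: red1_MuE)
  then obtain s1 where "red1 s s1" using nmu.IH by blast
  then show ?case by (blast intro: red1.named red1.muc)
qed

lemma rel_normal: "rel f y A t s \<Longrightarrow> normal s \<Longrightarrow> normal t"
  unfolding normal_def using rel_red_t by blast

lemma rel_sim: "rel f y A t s \<Longrightarrow> red1 s s' \<Longrightarrow> \<exists>t'. red1\<^sup>*\<^sup>* t t' \<and> rel f y A t' s'"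
proof (induction arbitrary: s' rule: rel.induct)
  case (var f y A i) then show ?case by (auto elim: red1_LVarE)
next
  case (lam f y A t s)
  from lam.prems obtain s1 where s': "s' = Lam s1" "red1 s s1" by (auto elim: red1_LamE)
  then obtain t1 where "red1\<^sup>*\<^sup>* t t1" "rel (up f) (Suc y) A t1 s1" using lam.IH by blast
  then show ?case using s' by (blast intro: rtc_lam rel.lam)
next
  case (app f y A t s u v)
  from app.prems show ?case
  proof (rule red1_AppE)
    fix N assume 1: "s = Lam N" "s' = substL N 0 v" 
    from app.hyps(1)[unfolded 1(1)] obtain M where M: "t = Lam M" "rel (up f) (Suc y) A M N"
      by (auto elim: relLamS)
    have v: "rel f (sb 0 (Suc y)) A u v" using app.hyps(2) by (simp add: sb_def)
    have c: "\<forall>i. i \<noteq> 0 \<longrightarrow> up f i \<noteq> 0 \<and> f (sb 0 i) = sb 0 (up f i)"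
      by (auto simp: up_def sb_def split: nat.split)
    have "rel f (sb 0 (Suc y)) A (substL M 0 u) (substL N 0 v)"
      by (rule rel_substL[OF M(2) v _ c]) (auto simp: up_def)
    then have "rel f y A (substL M 0 u) s'" using 1 by (simp add: sb_def)
    moreover have "red1\<^sup>*\<^sup>* (App t u) (substL M 0 u)" using M(1) red1.beta[of M u] by simp
    ultimately show ?thesis by blast
  next
    fix N assume 2: "s = Mu N" "s' = Mu (substM N 0 (liftM 0 v))"
    from app.hyps(1)[unfolded 2(1)] obtain M where M: "t = Mu M" "rel f y (Suc ` A) M N"
      by (auto elim: relMuS)
    have "rel f y (Suc ` A) (liftM 0 u) (liftM 0 v)" using app.hyps(2) by (rule rel_liftM0)
    then have "rel f y (Suc ` A) (substM M 0 (liftM 0 u)) (substM N 0 (liftM 0 v))"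
      by (rule rel_substM[OF M(2)]) auto
    then have "rel f y A (Mu (substM M 0 (liftM 0 u))) s'" using 2 by (simp add: rel.mu)
    moreover have "red1\<^sup>*\<^sup>* (App t u) (Mu (substM M 0 (liftM 0 u)))" using M(1) red1.mu[of M u] by simp
    ultimately show ?thesis by blast
  next
    fix s1 assume 3: "s' = App s1 v" "red1 s s1"
    then obtain t1 where "red1\<^sup>*\<^sup>* t t1" "rel f y A t1 s1" using app.IH(1) by blast
    then show ?thesis using 3 app.hyps(2) by (blast intro: rtc_appL rel.app)
  next
    fix v1 assume 4: "s' = App s v1" "red1 v v1"
    then obtain u1 where "red1\<^sup>*\<^sup>* u u1" "rel f y A u1 v1" using app.IH(2) by blast
    then show ?thesis using 4 app.hyps(1) by (blast intro: rtc_appR rel.app)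
  qed
next
  case (mu f y A t s)
  from mu.prems obtain s1 where s': "s' = Mu s1" "red1 s s1" by (auto elim: red1_MuE)
  then obtain t1 where "red1\<^sup>*\<^sup>* t t1" "rel f y (Suc ` A) t1 s1" using mu.IH by blast
  then show ?case using s' by (blast intro: rtc_mu rel.mu)
next
  case (named f y A t s a)
  from named.prems obtain s1 where s': "s' = Named a s1" "red1 s s1" by (auto elim: red1_NamedE)
  then obtain t1 where "red1\<^sup>*\<^sup>* t t1" "rel f y A t1 s1" using named.IH by blast
  then show ?case using s' by (blast intro: rtc_named rel.named)
next
  case (nap a A f y t s)
  from nap.prems obtain s1 where s': "s' = Named a s1" "red1 (App s (LVar y)) s1" by (auto elim: red1_NamedE)
  from s'(2) show ?case
  proof (rule red1_AppE)
    fix N assume 1: "s = Lam N" "s1 = substL N 0 (LVar y)" 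
    from nap.hyps(2)[unfolded 1(1)] obtain M where M: "t = Lam M" "rel (up f) (Suc y) A M N"
      by (auto elim: relLamS)
    let ?h = "\<lambda>i. if i < 0 then i else if i = 0 then y else i - 1"
    have "rel (?h \<circ> up f) (?h (Suc y)) A M (ren ?h N)" by (rule rel_ren_s[OF M(2)])
    moreover have "?h \<circ> up f = cns y f" by (auto simp: up_def cns_def fun_eq_iff split: nat.split)
    ultimately have "rel (cns y f) y A M (substL N 0 (LVar y))" by (simp add: substL_var_ren)
    then have "rel f y A (Named a (Lam M)) s'" using s' 1 nap.hyps(1) by (simp add: rel.nlam)
    then show ?thesis using M by blast
  next
    fix N assume 2: "s = Mu N" "s1 = Mu (substM N 0 (liftM 0 (LVar y)))"
    from nap.hyps(2)[unfolded 2(1)] obtain M where M: "t = Mu M" "rel f y (Suc ` A) M N"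
      by (auto elim: relMuS)
    have "rel f y (insert 0 (Suc ` A)) M (substM N 0 (LVar y))" by (rule rel_substM_var[OF M(2)]) auto
    then have "rel f y A (Named a (Mu M)) s'" using s' 2 nap.hyps(1) by (simp add: rel.nmu)
    then show ?thesis using M by blast
  next
    fix s2 assume 3: "s1 = App s2 (LVar y)" "red1 s s2"
    then obtain t1 where "red1\<^sup>*\<^sup>* t t1" "rel f y A t1 s2" using nap.IH by blast
    then show ?thesis using 3 s' nap.hyps(1) by (blast intro: rtc_named rel.nap)
  next
    fix v1 assume "red1 (LVar y) v1"
    then show ?thesis by (auto elim: red1_LVarE)
  qed
next
  case (nlam a A y f t s)
  from nlam.prems obtain s1 where s': "s' = Named a s1" "red1 s s1" by (auto elim: red1_NamedE)
  then obtain t1 where "red1\<^sup>*\<^sup>* t t1" "rel (cns y f) y A t1 s1" using nlam.IH by blast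
  then show ?case using s' nlam.hyps(1) by (blast intro: rtc_named rtc_lam rel.nlam)
next
  case (nmu a A f y t s)
  from nmu.prems obtain s1 where s': "s' = Named a s1" "red1 (Mu s) s1" by (auto elim: red1_NamedE)
  from s'(2) obtain s2 where s2: "s1 = Mu s2" "red1 s s2" by (auto elim: red1_MuE)
  then obtain t1 where "red1\<^sup>*\<^sup>* t t1" "rel f y (insert 0 (Suc ` A)) t1 s2" using nmu.IH by blast
  then show ?case using s' s2 nmu.hyps(1) by (blast intro: rtc_named rtc_mu rel.nmu)
qed



definition Fx :: "nat list \<Rightarrow> nat \<Rightarrow> nat \<Rightarrow> nat \<Rightarrow> nat" where
  "Fx xs y dl i = (if dl \<le> i \<and> i - dl \<in> set xs then y + dl else i)"
definition Am :: "nat list \<Rightarrow> nat \<Rightarrow> nat set" where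
  "Am as dm = {a. dm \<le> a \<and> a - dm \<in> set as}"

lemma sigma_rel: "rel (Fx xs y dl) (y + dl) (Am as dm) t (sigma_aux xs as y dl dm t)"
proof (induction t arbitrary: dl dm)
  case (LVar i)
  have "sigma_aux xs as y dl dm (LVar i) = LVar (Fx xs y dl i)" by (simp add: Fx_def)
  then show ?case by (simp add: rel.var)
next
  case (Lam t)
  have "up (Fx xs y dl) = Fx xs y (Suc dl)"
    by (auto simp: up_def Fx_def fun_eq_iff split: nat.split)
  moreover have "y + Suc dl = Suc (y + dl)" by simp
  ultimately show ?case using Lam[of "Suc dl" dm] by (simp add: rel.lam)
next
  case (App t u)
  then show ?case by (simp add: rel.app)
next
  case (Mu t)
  have "Am as (Suc dm) \<subseteq> Suc ` Am as dm"
  proof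
    fix a assume "a \<in> Am as (Suc dm)"
    then have "a = Suc (a - 1)" "a - 1 \<in> Am as dm" by (auto simp: Am_def)
    then show "a \<in> Suc ` Am as dm" by (metis imageI)
  qed
  then show ?case using Mu[of dl "Suc dm"] by (simp add: rel.mu rel_mono)
next
  case (Named a t)
  show ?case
  proof (cases "dm \<le> a \<and> a - dm \<in> set as")
    case True
    then have "a \<in> Am as dm" by (simp add: Am_def)
    then show ?thesis using True Named[of dl dm] by (simp add: rel.nap)
  next
    case False
    then have "sigma_aux xs as y dl dm (Named a t) = Named a (sigma_aux xs as y dl dm t)" by simp
    then show ?thesis using Named[of dl dm] by (simp add: rel.named)
  qed
qed

lemma rel_normalizable: "rel f y A t s \<Longrightarrow> normalizable s \<Longrightarrow> normalizable t"
proof -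
  assume r: "rel f y A t s" and "normalizable s"
  then obtain u where su: "red1\<^sup>*\<^sup>* s u" and nu: "normal u" unfolding normalizable_def by blast
  have "\<forall>t. rel f y A t s \<longrightarrow> normalizable t"
    using su
  proof (induction rule: converse_rtranclp_induct)
    case base
    then show ?case using nu rel_normal unfolding normalizable_def by blast
  next
    case (step s s1)
    show ?case
    proof (intro allI impI)
      fix t assume "rel f y A t s"
      then obtain t' where "red1\<^sup>*\<^sup>* t t'" "rel f y A t' s1" using rel_sim step(1) by blast
      then show "normalizable t" using step(3) unfolding normalizable_def
        by (meson rtranclp_trans)
    qed
  qed
  then show ?thesis using r by blast
qed

lemma named_rtc: "red1\<^sup>*\<^sup>* (Named a t) w \<Longrightarrow> \<exists>w'. w = Named a w' \<and> red1\<^sup>*\<^sup>* t w'"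
proof (induction rule: rtranclp_induct)
  case base then show ?case by blast
next
  case (step w1 w2)
  then obtain w' where "w1 = Named a w'" "red1\<^sup>*\<^sup>* t w'" by blast
  with step(2) obtain w'' where "w2 = Named a w''" "red1 w' w''" by (auto elim: red1_NamedE)
  then show ?case using \<open>red1\<^sup>*\<^sup>* t w'\<close> by (blast intro: rtranclp.rtrancl_into_rtrancl)
qed

lemma normalizable_named: "normalizable (Named a t) \<Longrightarrow> normalizable t"
proof -
  assume "normalizable (Named a t)"
  then obtain u where "red1\<^sup>*\<^sup>* (Named a t) u" "normal u" unfolding normalizable_def by blast
  then obtain w where "u = Named a w" "red1\<^sup>*\<^sup>* t w" using named_rtc by blast
  moreover have "normal w" using \<open>normal u\<close> \<open>u = Named a w\<close> unfolding normal_def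
    by (blast intro: red1.named)
  ultimately show ?thesis unfolding normalizable_def by blast
qed

lemma normalizable_named_intro: "normalizable t \<Longrightarrow> normalizable (Named a t)"
proof -
  assume "normalizable t"
  then obtain u where "red1\<^sup>*\<^sup>* t u" "normal u" unfolding normalizable_def by blast
  moreover have "normal (Named a u)" using \<open>normal u\<close> unfolding normal_def
    by (auto elim: red1_NamedE)
  ultimately show ?thesis unfolding normalizable_def by (blast intro: rtc_named)
qed

theorem mainTheorem12:
  fixes t :: trm and y :: nat and xs as :: "nat list"
  assumes "distinct xs" and "distinct as"
  shows "(normalizable (App (sigma xs as y t) (LVar y)) \<longrightarrow> normalizable t)
       \<and> (normalizable (sigma xs as y t) \<longrightarrow> normalizable t)"
proof -
  have r: "rel (Fx xs y 0) y (Am as 0) t (sigma xs as y t)"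
    using sigma_rel[of xs y 0 as 0 t] by (simp add: sigma_def)
  have r2: "rel (Fx xs y 0) y (insert 0 (Am as 0)) (Named 0 t) (Named 0 (App (sigma xs as y t) (LVar y)))"
    by (rule rel.nap) (auto intro: rel_mono[OF r])
  show ?thesis
  proof (intro conjI impI)
    assume "normalizable (App (sigma xs as y t) (LVar y))"
    then have "normalizable (Named 0 (App (sigma xs as y t) (LVar y)))" by (rule normalizable_named_intro)
    then have "normalizable (Named 0 t)" by (rule rel_normalizable[OF r2])
    then show "normalizable t" by (rule normalizable_named)
  next
    assume "normalizable (sigma xs as y t)"
    then show "normalizable t" by (rule rel_normalizable[OF r])
  qed
qed


end
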